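(* For $n\ge1$, the partial-sum operator $s_n:\mathcal D_1\to\mathcal D_1$, $s_n(f)=\sum_{k=0}^na_kz^k$ for $f=\sum_{k\ge0}a_kz^k$, has operator norm $\|s_n\|\ge\sqrt{n+1}$. In particular, for $f_n(z)=nz^{n+1}-(n+1)z^n$ one has $\mathcal D_1(f_n)=n(n+1)$ and $\|s_n(f_n)\|^2_{\mathcal D_1}=n(n+1)^2$.
   Context: $\mathbb D$ is the open unit disk, $dA$ normalized area measure. $\mathcal D_1$ is the space of holomorphic $f$ on $\mathbb D$ with $\mathcal D_1(f):=\int_{\mathbb D}\frac{1-|z|^2}{|1-z|^2}|f'(z)|^2\,dA(z)<\infty$, normed by $\|f\|^2_{\mathcal D_1}=|f(0)|^2+\mathcal D_1(f)$. *)

theory Defs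
  imports "HOL-Complex_Analysis.Complex_Analysis"
begin

text \<open>Dirichlet-type integral D_1(f) with respect to normalized area measure dA = dx dy / pi
  on the unit disc, as an extended nonnegative real.\<close>
definition D1_integral :: "(complex \<Rightarrow> complex) \<Rightarrow> ennreal" where
  "D1_integral f = (\<integral>\<^sup>+ z \<in> ball 0 1.
      ennreal ((1 - (cmod z)\<^sup>2) / (cmod (1 - z))\<^sup>2 * (cmod (deriv f z))\<^sup>2 / pi) \<partial>lborel)"

definition D1_space :: "(complex \<Rightarrow> complex) set" where
  "D1_space = {f. f holomorphic_on ball 0 1 \<and> D1_integral f < \<infinity>}"

definition D1_norm :: "(complex \<Rightarrow> complex) \<Rightarrow> real" where
  "D1_norm f = sqrt ((cmod (f 0))\<^sup>2 + enn2real (D1_integral f))"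

definition taylor_coeff :: "(complex \<Rightarrow> complex) \<Rightarrow> nat \<Rightarrow> complex" where
  "taylor_coeff f k = (deriv ^^ k) f 0 / of_nat (fact k)"

definition partial_sum_op :: "nat \<Rightarrow> (complex \<Rightarrow> complex) \<Rightarrow> (complex \<Rightarrow> complex)" where
  "partial_sum_op n f = (\<lambda>z. \<Sum>k\<le>n. taylor_coeff f k * z ^ k)"

definition D1_opnorm :: "((complex \<Rightarrow> complex) \<Rightarrow> (complex \<Rightarrow> complex)) \<Rightarrow> ereal" where
  "D1_opnorm T = Sup {ereal (D1_norm (T f) / D1_norm f) | f. f \<in> D1_space \<and> D1_norm f \<noteq> 0}"

end

theory Submission
  imports Defs
begin


lemma meas_Complex: "(\<lambda>p. Complex (fst p) (snd p)) \<in> (lborel \<Otimes>\<^sub>M lborel) \<rightarrow>\<^sub>M borel"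
proof -
  have "(\<lambda>p::real\<times>real. Complex (fst p) (snd p)) \<in> borel_measurable borel"
    unfolding Complex_eq by (intro borel_measurable_continuous_onI continuous_intros)
  then show ?thesis unfolding lborel_prod by simp
qed

lemma lborel_complex: "distr (lborel \<Otimes>\<^sub>M lborel) borel (\<lambda>p. Complex (fst p) (snd p)) = lborel"
proof (rule lborel_eqI[symmetric])
  fix l u :: complex assume le: "\<And>b. b \<in> Basis \<Longrightarrow> l \<bullet> b \<le> u \<bullet> b"
  have pre: "(\<lambda>p. Complex (fst p) (snd p)) -` box l u \<inter> space (lborel \<Otimes>\<^sub>M lborel) = box (Re l) (Re u) \<times> box (Im l) (Im u)"
    by (auto simp: box_def Basis_complex_def space_pair_measure)
  show "emeasure (distr (lborel \<Otimes>\<^sub>M lborel) borel (\<lambda>p. Complex (fst p) (snd p))) (box l u) = (\<Prod>b\<in>Basis. (u - l) \<bullet> b)"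
    using le[of 1] le[of \<i>]
    by (simp add: emeasure_distr[OF meas_Complex] pre lborel.emeasure_pair_measure_Times Basis_complex_def ennreal_mult')
qed simp

lemma nn_integral_complex:
  assumes [measurable]: "f \<in> borel_measurable borel"
  shows "(\<integral>\<^sup>+z. f z \<partial>lborel) = (\<integral>\<^sup>+y. \<integral>\<^sup>+x. f (Complex x y) \<partial>lborel \<partial>lborel)"
proof -
  have "(\<integral>\<^sup>+z. f z \<partial>lborel) = (\<integral>\<^sup>+z. f z \<partial>distr (lborel \<Otimes>\<^sub>M lborel) borel (\<lambda>p. Complex (fst p) (snd p)))"
    by (simp add: lborel_complex)
  also have "\<dots> = (\<integral>\<^sup>+p. f (Complex (fst p) (snd p)) \<partial>(lborel \<Otimes>\<^sub>M lborel))"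
    by (rule nn_integral_distr[OF meas_Complex]) simp
  also have "\<dots> = (\<integral>\<^sup>+y. \<integral>\<^sup>+x. f (Complex x y) \<partial>lborel \<partial>lborel)"
    by (subst lborel_pair.nn_integral_snd[symmetric]) (auto intro: measurable_compose[OF meas_Complex])
  finally show ?thesis .
qed




lemma S1:
  fixes F :: "real \<Rightarrow> ennreal" and y :: real
  assumes Fm[measurable]: "F \<in> borel_measurable borel"
    and supp: "\<And>x. 1 \<le> \<bar>x\<bar> \<Longrightarrow> F x = 0" and y: "y > 0"
  shows "(\<integral>\<^sup>+x. F x \<partial>lborel) = (\<integral>\<^sup>+t. F (- y * cos t / sin t) * ennreal (y / (sin t)^2) * indicator {0<..<pi} t \<partial>lborel)"
proof -
  define a where "a = arctan y"
  define b where "b = pi - arctan y"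
  define g where "g t = - y * cos t / sin t" for t
  define g' where "g' t = y / (sin t)^2" for t
  have a0: "0 < a" "a < pi/2" using y arctan_ubound[of y] by (auto simp: a_def arctan_less_zero_iff zero_less_arctan_iff)
  have ab: "pi/2 < b" "b < pi" using a0 by (auto simp: b_def a_def)
  have sinpos: "sin t > 0" if "t \<in> {a..b}" for t
    using that a0 ab by (intro sin_gt_zero) auto
  have ga: "g a = -1"
  proof -
    have c: "cos a > 0" using a0 by (intro cos_gt_zero) auto
    have "tan a = y" by (simp add: a_def tan_arctan)
    then have "sin a = y * cos a" using c by (simp add: tan_def field_simps)
    then show ?thesis using y c by (simp add: g_def)
  qed
  have gb: "g b = 1"
  proof -
    have "cos b = - cos a" "sin b = sin a" by (simp_all add: b_def a_def)
    then show ?thesis using ga by (simp add: g_def) (metis mult_zero_left mult_zero_right)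
  qed
  have deriv: "(g has_real_derivative g' t) (at t)" if "t \<in> {a..b}" for t
  proof -
    have s: "sin t \<noteq> 0" using sinpos[OF that] by simp
    have d: "((\<lambda>t. - y * cos t / sin t) has_real_derivative ((- y * - sin t) * sin t - (- y * cos t) * cos t) / (sin t * sin t)) (at t)"
      by (intro DERIV_divide DERIV_cmult DERIV_cos DERIV_sin s)
    have "((- y * - sin t) * sin t - (- y * cos t) * cos t) / (sin t * sin t) = y / (sin t)^2"
      by (simp add: power2_eq_square algebra_simps flip: distrib_left)
    with d show ?thesis unfolding g_def g'_def by simp
  qed
  have contg': "continuous_on {a..b} g'"
    unfolding g'_def using sinpos by (intro continuous_intros) force+
  have g'nn: "g' t \<ge> 0" for t using y by (simp add: g'_def)
  have "(\<integral>\<^sup>+x. F x \<partial>lborel) = (\<integral>\<^sup>+x. F x * indicator {g a..g b} x \<partial>lborel)"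
    by (intro nn_integral_cong) (auto simp: ga gb indicator_def supp abs_le_iff intro!: supp)
  also have "\<dots> = (\<integral>\<^sup>+x. F (g x) * g' x * indicator {a..b} x \<partial>lborel)"
    by (rule nn_integral_substitution_aux[OF Fm _ deriv contg' g'nn]) (use a0 ab in auto)
  also have "\<dots> = (\<integral>\<^sup>+t. F (- y * cos t / sin t) * ennreal (y / (sin t)^2) * indicator {0<..<pi} t \<partial>lborel)"
  proof (intro nn_integral_cong)
    fix t :: real
    show "F (g t) * ennreal (g' t) * indicator {a..b} t = F (- y * cos t / sin t) * ennreal (y / (sin t)\<^sup>2) * indicator {0<..<pi} t"
    proof (cases "t \<in> {a..b}")
      case True then show ?thesis using a0 ab by (auto simp: g_def g'_def indicator_def)
    next
      case False
      have "F (g t) = 0" if t: "0 < t" "t < pi"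
      proof (cases "t < a")
        case True
        have "tan t < tan a" using True t a0 by (intro tan_monotone) auto
        moreover have "tan t > 0" using True t a0 by (intro tan_gt_zero) auto
        ultimately have "1 / tan t > 1 / y" using y by (simp add: a_def tan_arctan frac_less2)
        moreover have "cos t / sin t = 1 / tan t" by (simp add: tan_def)
        ultimately have "y * (cos t / sin t) > y * (1/y)" using y by (metis mult_strict_left_mono)
        then have "g t < -1" using y by (simp add: g_def)
        then show ?thesis by (intro supp) simp
      next
        case False
        then have tb: "b < t" using \<open>t \<notin> {a..b}\<close> t by auto
        define s where "s = pi - t"
        have s: "0 < s" "s < a" using tb t by (auto simp: s_def b_def a_def)
        have "tan s < tan a" using s a0 by (intro tan_monotone) auto
        moreover have "tan s > 0" using s a0 by (intro tan_gt_zero) auto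
        ultimately have "1 / tan s > 1 / y" using y by (simp add: a_def tan_arctan frac_less2)
        moreover have "cos s / sin s = 1 / tan s" by (simp add: tan_def)
        moreover have cs: "cos t = - cos s" "sin t = sin s" by (simp_all add: s_def)
        ultimately have "y * (cos s / sin s) > y * (1/y)" using y by (metis mult_strict_left_mono)
        moreover have "g t = y * (cos s / sin s)" unfolding g_def cs by simp
        ultimately have "g t > 1" using y by simp
        then show ?thesis by (intro supp) simp
      qed
      then show ?thesis using False by (auto simp: indicator_def g_def)
    qed
  qed
  finally show ?thesis .
qed



lemma meas_fst[measurable]: "fst \<in> borel_measurable (borel :: (real\<times>real) measure)"
  by (intro borel_measurable_continuous_onI continuous_intros)
lemma meas_snd[measurable]: "snd \<in> borel_measurable (borel :: (real\<times>real) measure)"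
  by (intro borel_measurable_continuous_onI continuous_intros)

lemma meas_comp2:
  fixes F :: "real \<Rightarrow> real \<Rightarrow> ennreal"
  assumes "case_prod F \<in> borel_measurable borel" "a \<in> borel_measurable M" "b \<in> borel_measurable M"
  shows "(\<lambda>p. F (a p) (b p)) \<in> borel_measurable M"
proof -
  have "(\<lambda>p. (a p, b p)) \<in> M \<rightarrow>\<^sub>M borel"
    using measurable_Pair[OF assms(2,3)] by (simp add: borel_prod)
  from measurable_compose[OF this assms(1)] show ?thesis by simp
qed

lemma polar_upper:
  fixes F :: "real \<Rightarrow> real \<Rightarrow> ennreal"
  assumes Fm[measurable]: "case_prod F \<in> borel_measurable borel"
    and supp: "\<And>x y. 1 \<le> \<bar>x\<bar> \<Longrightarrow> F x y = 0"
  shows "(\<integral>\<^sup>+y. (\<integral>\<^sup>+x. F x y \<partial>lborel) * indicator {0<..} y \<partial>lborel) =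
    (\<integral>\<^sup>+t. (\<integral>\<^sup>+r. F (- r * cos t) (r * sin t) * ennreal r * indicator {0<..} r \<partial>lborel) * indicator {0<..<pi} t \<partial>lborel)"
proof -
  define H where "H t y = F (- y * cos t / sin t) y * ennreal (y / (sin t)^2) * indicator {0<..<pi} t * indicator {0<..} y" for t y
  have Hm: "case_prod H \<in> borel_measurable (lborel \<Otimes>\<^sub>M lborel)"
  proof -
    have [measurable]: "(\<lambda>x. F (- snd x * cos (fst x) / sin (fst x)) (snd x)) \<in> borel_measurable borel"
      by (rule meas_comp2[OF Fm]) measurable
    show ?thesis unfolding H_def lborel_prod measurable_lborel1 by measurable
  qed
  have Hm1[measurable]: "(\<lambda>y. H t y) \<in> borel_measurable borel" for t
  proof -
    have [measurable]: "(\<lambda>y. F (- y * cos t / sin t) y) \<in> borel_measurable borel"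
      by (rule meas_comp2[OF Fm]) measurable
    show ?thesis unfolding H_def by measurable
  qed
  have "(\<integral>\<^sup>+y. (\<integral>\<^sup>+x. F x y \<partial>lborel) * indicator {0<..} y \<partial>lborel) = (\<integral>\<^sup>+y. \<integral>\<^sup>+t. H t y \<partial>lborel \<partial>lborel)"
  proof (intro nn_integral_cong)
    fix y :: real
    show "(\<integral>\<^sup>+x. F x y \<partial>lborel) * indicator {0<..} y = (\<integral>\<^sup>+t. H t y \<partial>lborel)"
    proof (cases "y > 0")
      case True
      have "(\<integral>\<^sup>+x. F x y \<partial>lborel) = (\<integral>\<^sup>+t. F (- y * cos t / sin t) y * ennreal (y / (sin t)^2) * indicator {0<..<pi} t \<partial>lborel)"
        by (rule S1[OF _ _ True]) (auto intro: supp meas_comp2[OF Fm])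
      then show ?thesis using True by (simp add: H_def)
    next
      case False then show ?thesis by (simp add: H_def)
    qed
  qed
  also have "\<dots> = (\<integral>\<^sup>+t. \<integral>\<^sup>+y. H t y \<partial>lborel \<partial>lborel)"
    by (rule lborel_pair.Fubini'[OF Hm])
  also have "\<dots> = (\<integral>\<^sup>+t. (\<integral>\<^sup>+r. F (- r * cos t) (r * sin t) * ennreal r * indicator {0<..} r \<partial>lborel) * indicator {0<..<pi} t \<partial>lborel)"
  proof (intro nn_integral_cong)
    fix t :: real
    show "(\<integral>\<^sup>+y. H t y \<partial>lborel) = (\<integral>\<^sup>+r. F (- r * cos t) (r * sin t) * ennreal r * indicator {0<..} r \<partial>lborel) * indicator {0<..<pi} t"
    proof (cases "t \<in> {0<..<pi}")
      case True
      define s where "s = sin t"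
      have s: "s > 0" using True by (auto simp: s_def intro: sin_gt_zero)
      have "(\<integral>\<^sup>+y. H t y \<partial>lborel) = ennreal \<bar>s\<bar> * (\<integral>\<^sup>+r. H t (0 + s * r) \<partial>lborel)"
        by (rule nn_integral_real_affine) (use s in auto)
      also have "\<dots> = (\<integral>\<^sup>+r. ennreal s * H t (s * r) \<partial>lborel)"
        using s by (subst nn_integral_cmult) auto
      also have "\<dots> = (\<integral>\<^sup>+r. F (- r * cos t) (r * sin t) * ennreal r * indicator {0<..} r \<partial>lborel)"
      proof (intro nn_integral_cong)
        fix r :: real
        show "ennreal s * H t (s * r) = F (- r * cos t) (r * sin t) * ennreal r * indicator {0<..} r"
        proof (cases "r > 0")
          case True
          have e: "ennreal s * ennreal (s * r / s\<^sup>2) = ennreal r"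
            using s True by (simp add: ennreal_mult''[symmetric] power2_eq_square)
          have "ennreal s * H t (s * r) = F (- r * cos t) (r * sin t) * (ennreal s * ennreal (s * r / s\<^sup>2))"
            using True s \<open>t \<in> _\<close> by (simp add: H_def s_def[symmetric] mult.commute mult.left_commute zero_less_mult_iff)
          then show ?thesis using e True by simp
        next
          case False
          then show ?thesis using s by (simp add: H_def zero_less_mult_iff)
        qed
      qed
      finally show ?thesis using True by simp
    next
      case False
      then show ?thesis by (simp add: H_def)
    qed
  qed
  finally show ?thesis .
qed



lemma meas_Complex2[measurable]: "(\<lambda>p::real\<times>real. Complex (fst p) (snd p)) \<in> borel_measurable borel"
  unfolding Complex_eq by (intro borel_measurable_continuous_onI continuous_intros)

lemma polar_complex:
  fixes \<Phi> :: "complex \<Rightarrow> ennreal"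
  assumes Pm[measurable]: "\<Phi> \<in> borel_measurable borel"
    and supp: "\<And>z. 1 \<le> cmod z \<Longrightarrow> \<Phi> z = 0"
    and sym: "\<And>z. \<Phi> (cnj z) = \<Phi> z"
  shows "(\<integral>\<^sup>+z. \<Phi> z \<partial>lborel) = 2 * (\<integral>\<^sup>+t. (\<integral>\<^sup>+r. \<Phi> (Complex (- r * cos t) (r * sin t)) * ennreal r * indicator {0<..} r \<partial>lborel) * indicator {0<..<pi} t \<partial>lborel)"
proof -
  define F where "F x y = \<Phi> (Complex x y)" for x y
  have Fm: "case_prod F \<in> borel_measurable borel"
  proof -
    have "(\<lambda>p::real\<times>real. \<Phi> (Complex (fst p) (snd p))) \<in> borel_measurable borel"
      by (rule measurable_compose[OF meas_Complex2 Pm])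
    then show ?thesis by (simp add: F_def case_prod_beta')
  qed
  have Fm': "(\<lambda>(y, x). F x y) \<in> borel_measurable (lborel \<Otimes>\<^sub>M lborel)"
  proof -
    have "(\<lambda>p::real\<times>real. \<Phi> (Complex (snd p) (fst p))) \<in> borel_measurable borel"
      by (rule measurable_compose[OF _ Pm]) (unfold Complex_eq, intro borel_measurable_continuous_onI continuous_intros)
    then show ?thesis by (simp add: F_def case_prod_beta' lborel_prod)
  qed
  define \<Psi> where "\<Psi> y = (\<integral>\<^sup>+x. F x y \<partial>lborel)" for y
  have Psim[measurable]: "\<Psi> \<in> borel_measurable borel"
  proof -
    have "\<Psi> \<in> borel_measurable lborel"
      unfolding \<Psi>_def by (rule lborel.borel_measurable_nn_integral[OF Fm'])
    then show ?thesis by simp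
  qed
  have Psi_sym: "\<Psi> (- y) = \<Psi> y" for y
  proof -
    have "F x (-y) = F x y" for x
    proof -
      have "cnj (Complex x y) = Complex x (-y)" by (simp add: complex_eq_iff)
      then show ?thesis using sym[of "Complex x y"] by (simp add: F_def)
    qed
    then show ?thesis by (simp add: \<Psi>_def)
  qed
  have "(\<integral>\<^sup>+z. \<Phi> z \<partial>lborel) = (\<integral>\<^sup>+y. \<Psi> y \<partial>lborel)"
    by (simp add: nn_integral_complex \<Psi>_def F_def)
  also have "\<dots> = (\<integral>\<^sup>+y. \<Psi> y * indicator {0<..} y + \<Psi> y * indicator {..<0} y \<partial>lborel)"
    by (intro nn_integral_cong_AE, use AE_lborel_singleton[of 0] in eventually_elim) (auto simp: indicator_def)
  also have "\<dots> = (\<integral>\<^sup>+y. \<Psi> y * indicator {0<..} y \<partial>lborel) + (\<integral>\<^sup>+y. \<Psi> y * indicator {..<0} y \<partial>lborel)"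
    by (rule nn_integral_add) auto
  also have "(\<integral>\<^sup>+y. \<Psi> y * indicator {..<0} y \<partial>lborel) = ennreal \<bar>-1\<bar> * (\<integral>\<^sup>+y. \<Psi> (0 + -1 * y) * indicator {..<0} (0 + -1 * y) \<partial>lborel)"
    by (rule nn_integral_real_affine) auto
  also have "\<dots> = (\<integral>\<^sup>+y. \<Psi> y * indicator {0<..} y \<partial>lborel)"
    by (simp add: Psi_sym indicator_def)
  also have "(\<integral>\<^sup>+y. \<Psi> y * indicator {0<..} y \<partial>lborel) = (\<integral>\<^sup>+t. (\<integral>\<^sup>+r. F (- r * cos t) (r * sin t) * ennreal r * indicator {0<..} r \<partial>lborel) * indicator {0<..<pi} t \<partial>lborel)"
    unfolding \<Psi>_def
  proof (rule polar_upper[OF Fm])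
    fix x y :: real assume "1 \<le> \<bar>x\<bar>"
    then show "F x y = 0" unfolding F_def
      by (intro supp) (metis abs_Re_le_cmod complex.sel(1) order.trans)
  qed
  finally show ?thesis by (simp add: F_def mult_2)
qed




lemma ball01_meas[measurable]: "ball (0::complex) 1 \<in> sets borel"
  by simp
lemma ball01_pred[measurable]: "Measurable.pred borel (\<lambda>x::complex. x \<in> ball 0 1)"
  by (simp add: pred_def)

lemma sin_sq_mult: fixes r t :: real shows "(r * sin t) * (r * sin t) = r^2 - (r * cos t) * (r * cos t)"
proof -
  have h: "(sin t)^2 = 1 - (cos t)^2" using sin_cos_squared_add[of t] by linarith
  have "(r * sin t) * (r * sin t) = r^2 * (sin t)^2" by (simp add: power2_eq_square)
  also have "\<dots> = r^2 * (1 - (cos t)^2)" by (simp only: h)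
  also have "\<dots> = r^2 - (r * cos t) * (r * cos t)" by (simp add: power2_eq_square algebra_simps)
  finally show ?thesis .
qed

lemma cmod_polar: "cmod (Complex (- r * cos t) (r * sin t)) = \<bar>r\<bar>"
proof -
  have "(- r * cos t)^2 + (r * sin t)^2 = r^2"
    using sin_sq_mult[of r t] by (simp add: power2_eq_square)
  then show ?thesis by (simp add: complex_norm)
qed

lemma cmod_polar2: "(cmod (1 - Complex (- r * cos t) (r * sin t)))^2 = 1 + 2 * r * cos t + r^2"
proof -
  have "(cmod (1 - Complex (- r * cos t) (r * sin t)))^2 = (1 + r * cos t)^2 + (r * sin t)^2"
    by (simp add: cmod_power2)
  also have "\<dots> = 1 + 2 * r * cos t + r^2"
    using sin_sq_mult[of r t] by (simp add: power2_eq_square algebra_simps)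
  finally show ?thesis .
qed

lemma cmod_1_nat: "cmod (1 + complex_of_nat n) = real n + 1"
proof -
  have "1 + complex_of_nat n = of_nat (n + 1)" by simp
  then show ?thesis by (metis norm_of_nat of_nat_Suc Suc_eq_plus1 add.commute)
qed

lemma nn_integral_Ioo_Icc:
  "(\<integral>\<^sup>+x. f x * indicator {a<..<b} x \<partial>lborel) = (\<integral>\<^sup>+x. f x * indicator {a..b::real} x \<partial>lborel)"
proof (rule nn_integral_cong_AE)
  have "AE x in lborel. x \<noteq> a" "AE x in lborel. x \<noteq> b" by (rule AE_lborel_singleton)+
  then show "AE x in lborel. f x * indicator {a<..<b} x = f x * indicator {a..b} x"
    by eventually_elim (auto simp: indicator_def)
qed

lemma radial_int:
  fixes m :: nat and K :: real
  assumes K: "K \<ge> 0"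
  shows "(\<integral>\<^sup>+r. ennreal (K * (r^(2*m+1) - r^(2*m+3))) * indicator {0..1} r \<partial>lborel) = ennreal (K * (1/(2*m+2) - 1/(2*m+4)))"
proof -
  define F where "F r = K * (r^(2*m+2)/(2*m+2) - r^(2*m+4)/(2*m+4))" for r :: real
  have "(\<integral>\<^sup>+r. ennreal (K * (r^(2*m+1) - r^(2*m+3))) * indicator {0..1} r \<partial>lborel) = F 1 - F 0"
  proof (rule nn_integral_FTC_Icc)
    show "(\<lambda>r. K * (r^(2*m+1) - r^(2*m+3))) \<in> borel_measurable borel" by measurable
    fix r :: real assume r: "r \<in> {0..1}"
    show "DERIV F r :> K * (r^(2*m+1) - r^(2*m+3))"
      unfolding F_def
      apply (rule derivative_eq_intros refl | simp)+
      by (simp add: field_simps)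
    have "r^(2*m+3) \<le> r^(2*m+1)" using r by (intro power_decreasing) auto
    then show "0 \<le> K * (r^(2*m+1) - r^(2*m+3))" using K by simp
  qed simp
  also have "F 1 - F 0 = K * (1/(2*m+2) - 1/(2*m+4))" by (simp add: F_def)
  finally show ?thesis .
qed

lemma poisson_int:
  fixes r :: real assumes r: "0 \<le> r" "r < 1"
  shows "(\<integral>\<^sup>+t. ennreal ((1 - r^2) / (1 + 2 * r * cos t + r^2)) * indicator {0..pi} t \<partial>lborel) = ennreal pi"
proof -
  define F where "F t = t - 2 * arctan (r * sin t / (1 + r * cos t))" for t
  have pos: "1 + r * cos t > 0" for t
  proof -
    have "\<bar>r * cos t\<bar> \<le> r" using r by (simp add: abs_mult mult_left_le)
    then show ?thesis using r by linarith
  qed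
  have den: "1 + 2 * r * cos t + r^2 > 0" for t
  proof -
    have "1 + 2 * r * cos t + r^2 = (1 + r * cos t)^2 + (r * sin t)^2"
      using sin_sq_mult[of r t] by (simp add: power2_eq_square algebra_simps)
    then show ?thesis using pos[of t] by (smt (verit) zero_le_power2 zero_less_power2)
  qed
  have "(\<integral>\<^sup>+t. ennreal ((1 - r^2) / (1 + 2 * r * cos t + r^2)) * indicator {0..pi} t \<partial>lborel) = F pi - F 0"
  proof (rule nn_integral_FTC_Icc)
    show "(\<lambda>t. (1 - r^2) / (1 + 2 * r * cos t + r^2)) \<in> borel_measurable borel" by measurable
    fix t :: real
    define q where "q = 1 + r * cos t"
    define D where "D = 1 + 2 * r * cos t + r^2"
    have q: "q > 0" using pos[of t] by (simp add: q_def)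
    have Dp: "D > 0" using den[of t] by (simp add: D_def)
    have sc: "(sin t)^2 + (cos t)^2 = 1" by simp
    have d: "DERIV F t :> 1 - 2 * (inverse (1 + (r * sin t / (1 + r * cos t))^2) * ((r * cos t * (1 + r * cos t) - r * sin t * (0 + r * - sin t)) / ((1 + r * cos t) * (1 + r * cos t))))"
      unfolding F_def using pos[of t]
      by (intro DERIV_diff DERIV_ident DERIV_cmult DERIV_arctan[THEN DERIV_chain2] DERIV_divide DERIV_add DERIV_const DERIV_cos DERIV_sin) auto
    have e1: "q * q + (r * sin t) * (r * sin t) = D"
      unfolding q_def D_def sin_sq_mult by (simp add: power2_eq_square algebra_simps)
    have e2: "r * cos t * q - r * sin t * (0 + r * - sin t) = r * cos t + r^2"
    proof -
      have "r * cos t * q - r * sin t * (0 + r * - sin t) = r * cos t * q + (r * sin t) * (r * sin t)"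
        by (simp add: algebra_simps)
      then show ?thesis unfolding sin_sq_mult q_def by (simp add: power2_eq_square algebra_simps)
    qed
    have e3: "1 + (r * sin t / q)^2 = D / (q * q)"
      using q e1 by (simp add: field_simps power2_eq_square)
    have "1 - 2 * (inverse (1 + (r * sin t / q)^2) * ((r * cos t * q - r * sin t * (0 + r * - sin t)) / (q * q)))
       = 1 - 2 * ((r * cos t + r^2) / D)"
      unfolding e3 e2 using q Dp by (simp add: field_simps)
    also have "\<dots> = (1 - r^2) / D"
      using Dp by (simp add: field_simps D_def)
    finally show "DERIV F t :> (1 - r^2) / (1 + 2 * r * cos t + r^2)"
      using d by (simp add: q_def D_def)
    show "0 \<le> (1 - r^2) / (1 + 2 * r * cos t + r^2)"
      using den[of t] r by (intro divide_nonneg_pos) (auto simp: power_le_one abs_square_le_1)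
  qed simp
  also have "F pi - F 0 = pi" by (simp add: F_def)
  finally show ?thesis .
qed




lemma ind_ball_cnj[simp]: "indicator (ball 0 1) (cnj z) = (indicator (ball 0 1) z :: ennreal)"
  by (simp add: indicator_def dist_0_norm)

lemma ennreal_times_r: "0 \<le> r \<Longrightarrow> ennreal a * ennreal r = ennreal (a * r)"
  by (simp add: ennreal_mult'')

lemma cmod_m1_nat: "cmod (- 1 - complex_of_nat n) = real n + 1"
proof -
  have "- 1 - complex_of_nat n = - (1 + of_nat n)" by simp
  then show ?thesis by (metis cmod_1_nat norm_minus_cancel)
qed

lemma deriv_fn:
  assumes "n = Suc m"
  shows "deriv (\<lambda>z::complex. of_nat n * z^(n+1) - of_nat (n+1) * z^n) z = of_nat n * of_nat (n+1) * z^m * (z - 1)"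
proof (rule DERIV_imp_deriv)
  show "((\<lambda>z::complex. of_nat n * z^(n+1) - of_nat (n+1) * z^n) has_field_derivative of_nat n * of_nat (n+1) * z^m * (z - 1)) (at z)"
    unfolding assms
    by (rule derivative_eq_intros refl | simp)+ (simp add: algebra_simps)
qed

lemma deriv_sfn:
  assumes "n = Suc m"
  shows "deriv (\<lambda>z::complex. - of_nat (n+1) * z^n) z = - of_nat (n+1) * of_nat n * z^m"
proof (rule DERIV_imp_deriv)
  show "((\<lambda>z::complex. - of_nat (n+1) * z^n) has_field_derivative - of_nat (n+1) * of_nat n * z^m) (at z)"
    unfolding assms
    by (rule derivative_eq_intros refl | simp)+
qed

lemma D1_fn:
  assumes n: "n = Suc m"
  shows "D1_integral (\<lambda>z::complex. of_nat n * z^(n+1) - of_nat (n+1) * z^n) = ennreal (real n * (real n + 1))"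
proof -
  define K where "K = (real n * (real n + 1))^2 / pi"
  have K: "K \<ge> 0" by (simp add: K_def)
  define \<Phi> where "\<Phi> z = ennreal (K * cmod z ^ (2*m) * (1 - (cmod z)^2)) * indicator (ball 0 1) z" for z :: complex
  have "D1_integral (\<lambda>z::complex. of_nat n * z^(n+1) - of_nat (n+1) * z^n) = (\<integral>\<^sup>+z. \<Phi> z \<partial>lborel)"
    unfolding D1_integral_def
  proof (intro nn_integral_cong)
    fix z :: complex
    show "ennreal ((1 - (cmod z)\<^sup>2) / (cmod (1 - z))\<^sup>2 * (cmod (deriv (\<lambda>z. of_nat n * z ^ (n + 1) - of_nat (n + 1) * z ^ n) z))\<^sup>2 / pi) * indicator (ball 0 1) z = \<Phi> z"
    proof (cases "z \<in> ball 0 1")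
      case True
      then have "z \<noteq> 1" by auto
      then have nz: "cmod (1 - z) \<noteq> 0" by simp
      have "(cmod (deriv (\<lambda>z. of_nat n * z ^ (n + 1) - of_nat (n + 1) * z ^ n) z))\<^sup>2 = (real n * (real n + 1))^2 * cmod z ^ (2*m) * (cmod (1 - z))^2"
        unfolding deriv_fn[OF n] by (simp add: norm_mult norm_power power_mult_distrib norm_minus_commute power_mult[symmetric] mult.commute cmod_1_nat)
      moreover have nz2: "(cmod (1 - z))^2 \<noteq> 0" using nz by simp
      ultimately have "(1 - (cmod z)\<^sup>2) / (cmod (1 - z))\<^sup>2 * (cmod (deriv (\<lambda>z. of_nat n * z ^ (n + 1) - of_nat (n + 1) * z ^ n) z))\<^sup>2 / pi
          = K * cmod z ^ (2*m) * (1 - (cmod z)^2)"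
        unfolding K_def by (simp add: field_simps)
      then show ?thesis using True by (simp add: \<Phi>_def)
    qed (simp add: \<Phi>_def)
  qed
  also have "\<dots> = 2 * (\<integral>\<^sup>+t. (\<integral>\<^sup>+r. \<Phi> (Complex (- r * cos t) (r * sin t)) * ennreal r * indicator {0<..} r \<partial>lborel) * indicator {0<..<pi} t \<partial>lborel)"
    by (rule polar_complex) (auto simp: \<Phi>_def)
  also have "\<dots> = 2 * (\<integral>\<^sup>+t. ennreal (K * (1/(2*m+2) - 1/(2*m+4))) * indicator {0<..<pi} t \<partial>lborel)"
  proof -
    have "(\<integral>\<^sup>+r. \<Phi> (Complex (- r * cos t) (r * sin t)) * ennreal r * indicator {0<..} r \<partial>lborel) = (\<integral>\<^sup>+r. ennreal (K * (r^(2*m+1) - r^(2*m+3))) * indicator {0..1} r \<partial>lborel)" for t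
    proof (intro nn_integral_cong)
      fix r :: real
      define w where "w = Complex (- r * cos t) (r * sin t)"
      have cw: "cmod w = \<bar>r\<bar>" unfolding w_def by (rule cmod_polar)
      have "\<Phi> w * ennreal r * indicator {0<..} r = ennreal (K * (r^(2*m+1) - r^(2*m+3))) * indicator {0..1} r"
      proof (cases "0 < r \<and> r < 1")
        case True
        have wb: "w \<in> ball 0 1" using cw True by (simp add: dist_0_norm)
        have "\<Phi> w * ennreal r = ennreal (K * r ^ (2*m) * (1 - r^2)) * ennreal r"
          using True wb by (simp add: \<Phi>_def cw)
        also have "\<dots> = ennreal (K * r ^ (2*m) * (1 - r^2) * r)"
          using True by (simp add: ennreal_times_r)
        also have "K * r ^ (2*m) * (1 - r^2) * r = K * (r^(2*m+1) - r^(2*m+3))"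
          by (simp add: algebra_simps power_add power2_eq_square power3_eq_cube)
        finally show ?thesis using True by simp
      next
        case False
        have R: "ennreal (K * (r^(2*m+1) - r^(2*m+3))) * indicator {0..1} r = 0"
          using False by (cases "r = 0 \<or> r = 1") (auto simp: indicator_def power_0_left)
        have L: "\<Phi> w * ennreal r * indicator {0<..} r = 0"
        proof (cases "r \<le> 0")
          case True then show ?thesis by simp
        next
          case False
          then have "w \<notin> ball 0 1" using cw \<open>\<not> (0 < r \<and> r < 1)\<close> by (simp add: dist_0_norm)
          then show ?thesis by (simp add: \<Phi>_def)
        qed
        show ?thesis by (simp only: L R)
      qed
      then show "\<Phi> (Complex (- r * cos t) (r * sin t)) * ennreal r * indicator {0<..} r = ennreal (K * (r^(2*m+1) - r^(2*m+3))) * indicator {0..1} r"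
        by (simp only: w_def)
    qed
    then have "(\<integral>\<^sup>+r. \<Phi> (Complex (- r * cos t) (r * sin t)) * ennreal r * indicator {0<..} r \<partial>lborel) = ennreal (K * (1/(2*m+2) - 1/(2*m+4)))" for t
      using radial_int[OF K, of m] by simp
    then show ?thesis by simp
  qed
  also have "\<dots> = ennreal (real n * (real n + 1))"
  proof -
    have "2 * (\<integral>\<^sup>+t. ennreal (K * (1/(2*m+2) - 1/(2*m+4))) * indicator {0<..<pi} t \<partial>lborel) = 2 * (ennreal (K * (1/(2*m+2) - 1/(2*m+4))) * ennreal pi)"
      by (simp add: nn_integral_cmult_indicator)
    also have "\<dots> = 2 * ennreal (K * (1/(2*m+2) - 1/(2*m+4)) * pi)"
      by (simp add: ennreal_mult'')
    also have "\<dots> = ennreal (2 * (K * (1/(2*m+2) - 1/(2*m+4)) * pi))"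
      using ennreal_mult'[of 2 "K * (1/(2*m+2) - 1/(2*m+4)) * pi"] by simp
    also have "2 * (K * (1/(2*m+2) - 1/(2*m+4)) * pi) = 2 * (K * (1/(2*m+2) - 1/(2*m+4))) * pi"
      by simp
    also have "2 * (K * (1/(2*m+2) - 1/(2*m+4))) * pi = real n * (real n + 1)"
    proof -
      have Kp: "K * pi = (real n * (real n + 1))^2" unfolding K_def by simp
      have "2 * (K * (1/(2*m+2) - 1/(2*m+4))) * pi = (K * pi) * (2 * (1/(2*m+2) - 1/(2*m+4)))"
        by (simp add: algebra_simps)
      also have "2 * (1/(2*m+2) - 1/(2*m+4)) = 1 / ((real m + 1) * (real m + 2))"
      proof -
        have h: "2 * real m + 2 = 2 * (real m + 1)" "2 * real m + 4 = 2 * (real m + 2)" by simp_all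
        have "2 * (1/(2*m+2) - 1/(2*m+4)) = 1 / (real m + 1) - 1 / (real m + 2)"
          unfolding h by (simp add: divide_simps algebra_simps)
        also have "\<dots> = 1 / ((real m + 1) * (real m + 2))"
        proof -
          have a: "real m + 1 \<noteq> 0" "real m + 2 \<noteq> 0" by linarith+
          show ?thesis using a by (simp add: divide_simps algebra_simps)
        qed
        finally show ?thesis .
      qed
      also have "(K * pi) * (1 / ((real m + 1) * (real m + 2))) = real n * (real n + 1)"
      proof -
        have X: "real n * (real n + 1) = (real m + 1) * (real m + 2)" using n by (simp add: algebra_simps)
        have x: "(real m + 1) * (real m + 2) \<noteq> 0" by (smt (verit) mult_pos_pos of_nat_0_le_iff)
        show ?thesis unfolding Kp X using x by (simp add: power2_eq_square)
      qed
      finally show ?thesis .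
    qed
    finally show ?thesis .
  qed
  finally show ?thesis .
qed



lemma radial_int2:
  fixes m :: nat and C :: real
  assumes C: "C \<ge> 0"
  shows "(\<integral>\<^sup>+r. ennreal (C * r^(2*m+1)) * indicator {0..1} r \<partial>lborel) = ennreal (C / (2*m+2))"
proof -
  define F where "F r = C * (r^(2*m+2)/(2*m+2))" for r :: real
  have "(\<integral>\<^sup>+r. ennreal (C * r^(2*m+1)) * indicator {0..1} r \<partial>lborel) = F 1 - F 0"
  proof (rule nn_integral_FTC_Icc)
    show "(\<lambda>r. C * r^(2*m+1)) \<in> borel_measurable borel" by measurable
    fix r :: real assume r: "r \<in> {0..1}"
    show "DERIV F r :> C * r^(2*m+1)"
      unfolding F_def
      by (rule derivative_eq_intros refl | simp)+
    show "0 \<le> C * r^(2*m+1)" using C r by simp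
  qed simp
  also have "F 1 - F 0 = C / (2*m+2)" by (simp add: F_def)
  finally show ?thesis .
qed

lemma D1_sfn:
  assumes n: "n = Suc m"
  shows "D1_integral (\<lambda>z::complex. - of_nat (n+1) * z^n) = ennreal (real n * (real n + 1)^2)"
proof -
  define K where "K = (real n * (real n + 1))^2 / pi"
  have K: "K \<ge> 0" by (simp add: K_def)
  define \<Phi> where "\<Phi> z = ennreal (K * cmod z ^ (2*m) * (1 - (cmod z)^2) / (cmod (1 - z))^2) * indicator (ball 0 1) z" for z :: complex
  have \<Phi>m: "\<Phi> \<in> borel_measurable borel" unfolding \<Phi>_def by measurable
  define G where "G t r = ennreal (K * r^(2*m+1)) * ennreal ((1 - r^2) / (1 + 2 * r * cos t + r^2)) * indicator {0<..<1} r * indicator {0<..<pi} t" for t r :: real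
  have Dpos: "1 + 2 * r * cos t + r^2 > 0" if "0 \<le> r" "r < 1" for r t :: real
  proof -
    have "r * cos t \<ge> - r" using mult_left_mono[OF cos_ge_minus_one[of t] that(1)] by simp
    then have "1 + 2 * r * cos t + r^2 \<ge> (1 - r)^2" by (simp add: power2_eq_square algebra_simps)
    moreover have "(1 - r)^2 > 0" using that by simp
    ultimately show ?thesis by linarith
  qed
  have "D1_integral (\<lambda>z::complex. - of_nat (n+1) * z^n) = (\<integral>\<^sup>+z. \<Phi> z \<partial>lborel)"
    unfolding D1_integral_def
  proof (intro nn_integral_cong)
    fix z :: complex
    show "ennreal ((1 - (cmod z)\<^sup>2) / (cmod (1 - z))\<^sup>2 * (cmod (deriv (\<lambda>z. - of_nat (n+1) * z^n) z))\<^sup>2 / pi) * indicator (ball 0 1) z = \<Phi> z"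
    proof (cases "z \<in> ball 0 1")
      case True
      then have "z \<noteq> 1" by auto
      then have nz: "cmod (1 - z) \<noteq> 0" by simp
      have "(cmod (deriv (\<lambda>z. - of_nat (n+1) * z^n) z))\<^sup>2 = (real n * (real n + 1))^2 * cmod z ^ (2*m)"
        unfolding deriv_sfn[OF n] by (simp add: norm_mult norm_power power_mult_distrib power_mult[symmetric] mult.commute cmod_1_nat cmod_m1_nat)
      then show ?thesis using True nz by (simp add: \<Phi>_def K_def field_simps)
    qed (simp add: \<Phi>_def)
  qed
  also have "\<dots> = 2 * (\<integral>\<^sup>+t. (\<integral>\<^sup>+r. \<Phi> (Complex (- r * cos t) (r * sin t)) * ennreal r * indicator {0<..} r \<partial>lborel) * indicator {0<..<pi} t \<partial>lborel)"
  proof (rule polar_complex)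
    show "\<Phi> \<in> borel_measurable borel" by (rule \<Phi>m)
    fix z :: complex
    show "1 \<le> cmod z \<Longrightarrow> \<Phi> z = 0" by (simp add: \<Phi>_def)
    have "1 - cnj z = cnj (1 - z)" by simp
    then have "cmod (1 - cnj z) = cmod (1 - z)" by (metis complex_mod_cnj)
    then show "\<Phi> (cnj z) = \<Phi> z" by (simp add: \<Phi>_def)
  qed
  also have "\<dots> = 2 * (\<integral>\<^sup>+t. \<integral>\<^sup>+r. G t r \<partial>lborel \<partial>lborel)"
  proof -
    have "(\<integral>\<^sup>+r. \<Phi> (Complex (- r * cos t) (r * sin t)) * ennreal r * indicator {0<..} r \<partial>lborel) * indicator {0<..<pi} t = (\<integral>\<^sup>+r. G t r \<partial>lborel)" for t
    proof -
      have "(\<integral>\<^sup>+r. \<Phi> (Complex (- r * cos t) (r * sin t)) * ennreal r * indicator {0<..} r \<partial>lborel) * indicator {0<..<pi} t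
        = (\<integral>\<^sup>+r. \<Phi> (Complex (- r * cos t) (r * sin t)) * ennreal r * indicator {0<..} r * indicator {0<..<pi} t \<partial>lborel)"
      proof (rule nn_integral_multc[symmetric])
        have mc: "(\<lambda>r::real. Complex (- r * cos t) (r * sin t)) \<in> borel_measurable borel"
          unfolding Complex_eq by (intro borel_measurable_continuous_onI continuous_intros)
        have [measurable]: "(\<lambda>r. \<Phi> (Complex (- r * cos t) (r * sin t))) \<in> borel_measurable lborel"
          using measurable_compose[OF mc \<Phi>m] by simp
        show "(\<lambda>r. \<Phi> (Complex (- r * cos t) (r * sin t)) * ennreal r * indicator {0<..} r) \<in> borel_measurable lborel"
          by measurable
      qed
      also have "\<dots> = (\<integral>\<^sup>+r. G t r \<partial>lborel)"
      proof (intro nn_integral_cong)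
        fix r :: real
        define w where "w = Complex (- r * cos t) (r * sin t)"
        have cw: "cmod w = \<bar>r\<bar>" unfolding w_def by (rule cmod_polar)
        have cw2: "(cmod (1 - w))^2 = 1 + 2 * r * cos t + r^2" unfolding w_def by (rule cmod_polar2)
        have "\<Phi> w * ennreal r * indicator {0<..} r * indicator {0<..<pi} t = G t r"
        proof (cases "0 < r \<and> r < 1")
          case True
          have D: "1 + 2 * r * cos t + r^2 > 0" using Dpos True by auto
          have q: "(1 - r^2) / (1 + 2 * r * cos t + r^2) \<ge> 0" using D True by (simp add: power_le_one)
          have wb: "w \<in> ball 0 1" using cw True by (simp add: dist_0_norm)
          have "\<Phi> w * ennreal r = ennreal (K * r^(2*m) * (1 - r^2) / (1 + 2 * r * cos t + r^2)) * ennreal r"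
            using True wb by (simp add: \<Phi>_def cw cw2)
          also have "\<dots> = ennreal (K * r^(2*m) * (1 - r^2) / (1 + 2 * r * cos t + r^2) * r)"
            using True by (simp add: ennreal_times_r)
          also have "K * r^(2*m) * (1 - r^2) / (1 + 2 * r * cos t + r^2) * r = (K * r^(2*m+1)) * ((1 - r^2) / (1 + 2 * r * cos t + r^2))"
            by (simp add: field_simps)
          also have "ennreal \<dots> = ennreal (K * r^(2*m+1)) * ennreal ((1 - r^2) / (1 + 2 * r * cos t + r^2))"
            using K True q by (intro ennreal_mult) auto
          finally show ?thesis using True by (simp add: G_def)
        next
          case False
          have "\<Phi> w * ennreal r * indicator {0<..} r = 0"
          proof (cases "r \<le> 0")
            case True then show ?thesis by simp
          next
            case False
            then have "w \<notin> ball 0 1" using cw \<open>\<not> (0 < r \<and> r < 1)\<close> by (simp add: dist_0_norm)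
            then show ?thesis by (simp add: \<Phi>_def)
          qed
          moreover have "G t r = 0" using False by (simp add: G_def)
          ultimately show ?thesis by simp
        qed
        then show "\<Phi> (Complex (- r * cos t) (r * sin t)) * ennreal r * indicator {0<..} r * indicator {0<..<pi} t = G t r"
          by (simp only: w_def)
      qed
      finally show ?thesis .
    qed
    then show ?thesis by simp
  qed
  also have "\<dots> = 2 * (\<integral>\<^sup>+r. \<integral>\<^sup>+t. G t r \<partial>lborel \<partial>lborel)"
  proof -
    have Gm: "case_prod G \<in> borel_measurable (lborel \<Otimes>\<^sub>M lborel)"
      unfolding G_def lborel_prod measurable_lborel1 by measurable
    show ?thesis using lborel_pair.Fubini'[OF Gm] by simp
  qed
  also have "\<dots> = 2 * (\<integral>\<^sup>+r. ennreal (K * pi * r^(2*m+1)) * indicator {0..1} r \<partial>lborel)"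
  proof -
    have "(\<integral>\<^sup>+t. G t r \<partial>lborel) = ennreal (K * pi * r^(2*m+1)) * indicator {0<..<1} r" for r
    proof (cases "0 < r \<and> r < 1")
      case True
      have "(\<integral>\<^sup>+t. G t r \<partial>lborel) = (\<integral>\<^sup>+t. ennreal (K * r^(2*m+1)) * (ennreal ((1 - r^2) / (1 + 2 * r * cos t + r^2)) * indicator {0<..<pi} t) \<partial>lborel)"
        using True by (simp add: G_def mult.assoc)
      also have "\<dots> = ennreal (K * r^(2*m+1)) * (\<integral>\<^sup>+t. ennreal ((1 - r^2) / (1 + 2 * r * cos t + r^2)) * indicator {0<..<pi} t \<partial>lborel)"
        by (rule nn_integral_cmult) measurable
      also have "(\<integral>\<^sup>+t. ennreal ((1 - r^2) / (1 + 2 * r * cos t + r^2)) * indicator {0<..<pi} t \<partial>lborel) = ennreal pi"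
        using True by (simp add: nn_integral_Ioo_Icc poisson_int)
      finally show ?thesis using True K by (simp add: ennreal_mult'' ac_simps)
    next
      case False
      then show ?thesis by (simp add: G_def)
    qed
    then have "(\<integral>\<^sup>+r. \<integral>\<^sup>+t. G t r \<partial>lborel \<partial>lborel) = (\<integral>\<^sup>+r. ennreal (K * pi * r^(2*m+1)) * indicator {0<..<1} r \<partial>lborel)"
      by simp
    then show ?thesis by (simp add: nn_integral_Ioo_Icc)
  qed
  also have "\<dots> = 2 * ennreal (K * pi / (2*m+2))"
    using K by (subst radial_int2) auto
  also have "\<dots> = ennreal (real n * (real n + 1)^2)"
  proof -
    have "2 * ennreal (K * pi / (2*m+2)) = ennreal (2 * (K * pi / (2*m+2)))"
      using ennreal_mult'[of 2 "K * pi / (2*m+2)"] by simp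
    also have "2 * (K * pi / (2*m+2)) = real n * (real n + 1)^2"
    proof -
      have Kp: "K * pi = (real n * (real n + 1))^2" unfolding K_def by simp
      have "2 * (K * pi / (2*m+2)) = (real n * (real n + 1))^2 / (real m + 1)"
        unfolding Kp by (simp add: field_simps)
      also have "\<dots> = real n * (real n + 1)^2" unfolding n by (simp add: field_simps power2_eq_square)
      finally show ?thesis .
    qed
    finally show ?thesis .
  qed
  finally show ?thesis .
qed




lemma prod_fact_nat: "(\<Prod>i<n. (n - i)) = (fact n :: nat)"
  by (simp add: fact_prod_rev lessThan_atLeast0)

lemma deriv_funpow_poly:
  "(deriv ^^ k) (\<lambda>z::complex. a * z^p + b * z^q) =
     (\<lambda>z. a * of_nat (\<Prod>i<k. (p - i)) * z^(p-k) + b * of_nat (\<Prod>i<k. (q - i)) * z^(q-k))"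
proof (induction k)
  case 0 then show ?case by simp
next
  case (Suc k)
  have "(deriv ^^ Suc k) (\<lambda>z::complex. a * z^p + b * z^q) = deriv ((deriv ^^ k) (\<lambda>z::complex. a * z^p + b * z^q))"
    by simp
  also have "\<dots> = deriv (\<lambda>z. a * of_nat (\<Prod>i<k. (p - i)) * z^(p-k) + b * of_nat (\<Prod>i<k. (q - i)) * z^(q-k))"
    by (simp only: Suc.IH)
  also have "\<dots> = (\<lambda>z. a * of_nat (\<Prod>i<Suc k. (p - i)) * z^(p - Suc k) + b * of_nat (\<Prod>i<Suc k. (q - i)) * z^(q - Suc k))"
  proof (rule ext, rule DERIV_imp_deriv)
    fix z :: complex
    show "((\<lambda>z. a * of_nat (\<Prod>i<k. (p - i)) * z^(p-k) + b * of_nat (\<Prod>i<k. (q - i)) * z^(q-k)) has_field_derivative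
        a * of_nat (\<Prod>i<Suc k. (p - i)) * z^(p - Suc k) + b * of_nat (\<Prod>i<Suc k. (q - i)) * z^(q - Suc k)) (at z)"
      by (rule derivative_eq_intros refl | simp)+
  qed
  finally show ?case .
qed

lemma partial_sum_fn:
  assumes n: "n \<ge> 1"
  shows "partial_sum_op n (\<lambda>z::complex. of_nat n * z ^ (n + 1) - of_nat (n + 1) * z ^ n) = (\<lambda>z. - of_nat (n+1) * z^n)"
proof -
  have f: "(\<lambda>z::complex. of_nat n * z ^ (n + 1) - of_nat (n + 1) * z ^ n) = (\<lambda>z. of_nat n * z ^ (n + 1) + (- of_nat (n + 1)) * z ^ n)"
    by (simp add: algebra_simps)
  have tc: "taylor_coeff (\<lambda>z::complex. of_nat n * z ^ (n + 1) - of_nat (n + 1) * z ^ n) k = (if k = n then - of_nat (n+1) else 0)"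
    if "k \<le> n" for k
  proof -
    have "taylor_coeff (\<lambda>z::complex. of_nat n * z ^ (n + 1) - of_nat (n + 1) * z ^ n) k
        = (of_nat n * of_nat (\<Prod>i<k. (n + 1 - i)) * 0^(n + 1 - k) + (- of_nat (n + 1)) * of_nat (\<Prod>i<k. (n - i)) * 0^(n - k)) / of_nat (fact k)"
      unfolding taylor_coeff_def f deriv_funpow_poly by simp
    also have "\<dots> = (if k = n then - of_nat (n+1) else 0)"
    proof (cases "k = n")
      case True
      then show ?thesis by (simp add: prod_fact_nat)
    next
      case False
      then show ?thesis using that by (simp add: power_0_left)
    qed
    finally show ?thesis .
  qed
  show ?thesis
  proof
    fix z :: complex
    have "partial_sum_op n (\<lambda>z::complex. of_nat n * z ^ (n + 1) - of_nat (n + 1) * z ^ n) z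
        = (\<Sum>k\<le>n. (if k = n then - of_nat (n+1) * z^k else 0))"
      unfolding partial_sum_op_def
    proof (intro sum.cong refl)
      fix k assume "k \<in> {..n}"
      then show "taylor_coeff (\<lambda>z::complex. of_nat n * z ^ (n + 1) - of_nat (n + 1) * z ^ n) k * z ^ k = (if k = n then - of_nat (n+1) * z^k else 0)"
        using tc[of k] by simp
    qed
    also have "\<dots> = - of_nat (n+1) * z^n" by simp
    finally show "partial_sum_op n (\<lambda>z::complex. of_nat n * z ^ (n + 1) - of_nat (n + 1) * z ^ n) z = - of_nat (n+1) * z^n" .
  qed
qed

theorem mainTheorem12:
  fixes n :: nat
  assumes "n \<ge> 1"
  defines "fn \<equiv> (\<lambda>z::complex. of_nat n * z ^ (n + 1) - of_nat (n + 1) * z ^ n)"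
  shows "ereal (sqrt (real n + 1)) \<le> D1_opnorm (partial_sum_op n)
    \<and> D1_integral fn = ennreal (real n * (real n + 1))
    \<and> (D1_norm (partial_sum_op n fn))\<^sup>2 = real n * (real n + 1)\<^sup>2"
proof -
  obtain m where n: "n = Suc m" using assms(1) by (cases n) auto
  have ps: "partial_sum_op n fn = (\<lambda>z. - of_nat (n+1) * z^n)"
    unfolding fn_def by (rule partial_sum_fn[OF assms(1)])
  have ps0: "partial_sum_op n fn 0 = 0" unfolding ps using n by simp
  have I2: "D1_integral fn = ennreal (real n * (real n + 1))"
    unfolding fn_def by (rule D1_fn[OF n])
  have I3: "D1_integral (partial_sum_op n fn) = ennreal (real n * (real n + 1)^2)"
    unfolding ps by (rule D1_sfn[OF n])
  have N3: "(D1_norm (partial_sum_op n fn))\<^sup>2 = real n * (real n + 1)\<^sup>2"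
    unfolding D1_norm_def I3 ps0 by simp
  have N2: "D1_norm fn = sqrt (real n * (real n + 1))"
    unfolding D1_norm_def I2 using n by (simp add: fn_def)
  have N3': "D1_norm (partial_sum_op n fn) = sqrt (real n * (real n + 1)^2)"
    unfolding D1_norm_def I3 ps0 by simp
  have pos: "real n * (real n + 1) > 0" using n by simp
  have ratio: "D1_norm (partial_sum_op n fn) / D1_norm fn = sqrt (real n + 1)"
  proof -
    have "D1_norm (partial_sum_op n fn) / D1_norm fn = sqrt (real n * (real n + 1)^2 / (real n * (real n + 1)))"
      unfolding N2 N3' by (rule real_sqrt_divide[symmetric])
    also have "real n * (real n + 1)^2 / (real n * (real n + 1)) = real n + 1"
      using pos by (simp add: power2_eq_square field_simps)
    finally show ?thesis .
  qed
  have hol: "fn holomorphic_on ball 0 1"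
    unfolding fn_def by (intro holomorphic_intros)
  have sp: "fn \<in> D1_space"
    unfolding D1_space_def using hol I2 by simp
  have nz: "D1_norm fn \<noteq> 0" using N2 pos n by simp
  have "ereal (sqrt (real n + 1)) \<in> {ereal (D1_norm (partial_sum_op n f) / D1_norm f) | f. f \<in> D1_space \<and> D1_norm f \<noteq> 0}"
    using sp nz ratio by (metis (mono_tags, lifting) mem_Collect_eq)
  then have "ereal (sqrt (real n + 1)) \<le> D1_opnorm (partial_sum_op n)"
    unfolding D1_opnorm_def by (rule Sup_upper)
  then show ?thesis using I2 N3 by simp
qed

end
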